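(* Assume the setting described in the context, for $i\in\{1,\dots,H\}$ let $W_i\colon\mathbb{R}^{\mathfrak{d}}\to\mathbb{R}$ satisfy $W_i(\theta)=\big[\sum_{j=1}^d(\mathfrak{w}^\theta_{i,j})^2\big]+(\mathfrak{b}^\theta_i)^2-(\mathfrak{v}^\theta_i)^2$ for all $\theta\in\mathbb{R}^{\mathfrak{d}}$, and let $\Theta\in C([0,\infty),\mathbb{R}^{\mathfrak{d}})$ satisfy $\Theta_t=\Theta_0-\int_0^t\mathcal{G}(\Theta_s)\,\mathrm{d}s$ for all $t\in[0,\infty)$. Then $W_i(\Theta_t)=W_i(\Theta_0)$ for all $t\in[0,\infty)$, $i\in\{1,\dots,H\}$, and $\sum_{i=1}^HW_i(\Theta_t)=\sum_{i=1}^HW_i(\Theta_0)$ for all $t\in[0,\infty)$.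
   Context: Setting: $d,H,\mathfrak{d}\in\mathbb{N}$ with $\mathfrak{d}=dH+2H+1$, $\mathscr{a}\in\mathbb{R}$, $\mathscr{b}\in(\mathscr{a},\infty)$, $f\in C([\mathscr{a},\mathscr{b}]^d,\mathbb{R})$. For $\theta=(\theta_1,\dots,\theta_{\mathfrak{d}})\in\mathbb{R}^{\mathfrak{d}}$, $i\in\{1,\dots,H\}$, $j\in\{1,\dots,d\}$ put $\mathfrak{w}^\theta_{i,j}=\theta_{(i-1)d+j}$, $\mathfrak{b}^\theta_i=\theta_{Hd+i}$, $\mathfrak{v}^\theta_i=\theta_{H(d+1)+i}$, $\mathfrak{c}^\theta=\theta_{\mathfrak{d}}$. Let $\mathfrak{R}_r\in C^1(\mathbb{R},\mathbb{R})$, $r\in\mathbb{N}$, satisfy for all $x\in\mathbb{R}$ that $\lim_{r\to\infty}\big(|\mathfrak{R}_r(x)-\max\{x,0\}|+|(\mathfrak{R}_r)'(x)-\mathbb{1}_{(0,\infty)}(x)|\big)=0$ and $\sup_{r\in\mathbb{N}}\sup_{y\in[-|x|,|x|]}|(\mathfrak{R}_r)'(y)|<\infty$. Let $\mu$ be a finite measure on $\mathcal{B}([\mathscr{a},\mathscr{b}]^d)$. For $r\in\mathbb{N}$, $\theta\in\mathbb{R}^{\mathfrak{d}}$ let $\mathfrak{L}_r(\theta)=\int_{[\mathscr{a},\mathscr{b}]^d}\big(f(y)-\mathfrak{c}^\theta-\sum_{i=1}^H\mathfrak{v}^\theta_i\,\mathfrak{R}_r(\mathfrak{b}^\theta_i+\sum_{j=1}^d\mathfrak{w}^\theta_{i,j}y_j)\big)^2\,\mu(\mathrm{d}y)$.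 Let $\mathcal{G}\colon\mathbb{R}^{\mathfrak{d}}\to\mathbb{R}^{\mathfrak{d}}$ satisfy $\mathcal{G}(\theta)=\lim_{r\to\infty}(\nabla\mathfrak{L}_r)(\theta)$ for every $\theta$ for which this limit exists ($\mathcal{G}$ is locally bounded and measurable). *)

theory Defs
  imports "HOL-Analysis.Analysis"
begin

text \<open>Parameter vectors theta in R^dd are elements of real^'n, where the index
  type 'n has dd elements and iota is a fixed bijection from {1..dd} onto 'n,
  so that theta_k (k in {1..dd}) is theta $ iota k.\<close>

definition wgt :: "(nat \<Rightarrow> 'n::finite) \<Rightarrow> nat \<Rightarrow> real^'n \<Rightarrow> nat \<Rightarrow> nat \<Rightarrow> real" where
  "wgt \<iota> d \<theta> i j = \<theta> $ \<iota> ((i - 1) * d + j)"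

definition bias :: "(nat \<Rightarrow> 'n::finite) \<Rightarrow> nat \<Rightarrow> nat \<Rightarrow> real^'n \<Rightarrow> nat \<Rightarrow> real" where
  "bias \<iota> d H \<theta> i = \<theta> $ \<iota> (H * d + i)"

definition outw :: "(nat \<Rightarrow> 'n::finite) \<Rightarrow> nat \<Rightarrow> nat \<Rightarrow> real^'n \<Rightarrow> nat \<Rightarrow> real" where
  "outw \<iota> d H \<theta> i = \<theta> $ \<iota> (H * (d + 1) + i)"

definition cout :: "(nat \<Rightarrow> 'n::finite) \<Rightarrow> nat \<Rightarrow> nat \<Rightarrow> real^'n \<Rightarrow> real" where
  "cout \<iota> d H \<theta> = \<theta> $ \<iota> (d * H + 2 * H + 1)"

text \<open>The loss L_r, with R standing for R_r; inputs y in [a,b]^d are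
  functions nat => real (extensional on {1..d}).\<close>
definition ann_loss ::
  "(nat \<Rightarrow> 'n::finite) \<Rightarrow> nat \<Rightarrow> nat \<Rightarrow> ((nat \<Rightarrow> real) \<Rightarrow> real) \<Rightarrow> (real \<Rightarrow> real)
    \<Rightarrow> (nat \<Rightarrow> real) measure \<Rightarrow> real^'n \<Rightarrow> real" where
  "ann_loss \<iota> d H f R \<mu> \<theta> =
     (\<integral>y. (f y - cout \<iota> d H \<theta>
            - (\<Sum>i = 1..H. outw \<iota> d H \<theta> i * R (bias \<iota> d H \<theta> i + (\<Sum>j = 1..d. wgt \<iota> d \<theta> i j * y j))))\<^sup>2 \<partial>\<mu>)"

definition grad :: "(real^'n \<Rightarrow> real) \<Rightarrow> real^'n \<Rightarrow> real^'n" where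
  "grad L \<theta> = (\<chi> k. frechet_derivative L (at \<theta>) (axis k 1))"

definition Wfun :: "(nat \<Rightarrow> 'n::finite) \<Rightarrow> nat \<Rightarrow> nat \<Rightarrow> nat \<Rightarrow> real^'n \<Rightarrow> real" where
  "Wfun \<iota> d H i \<theta> = (\<Sum>j = 1..d. (wgt \<iota> d \<theta> i j)\<^sup>2) + (bias \<iota> d H \<theta> i)\<^sup>2 - (outw \<iota> d H \<theta> i)\<^sup>2"

end

theory Submission
  imports Defs
begin


lemma DUI:
  fixes q :: "'v::euclidean_space \<Rightarrow> 'a \<Rightarrow> real" and Dq :: "'v \<Rightarrow> 'a \<Rightarrow> 'v \<Rightarrow> real"
  assumes fin: "finite_measure M"
    and der: "\<And>\<theta> x. x \<in> space M \<Longrightarrow> dist \<theta> \<theta>0 < 1 \<Longrightarrow> ((\<lambda>\<theta>. q \<theta> x) has_derivative Dq \<theta> x) (at \<theta>)"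
    and qi: "\<And>\<theta>. integrable M (q \<theta>)"
    and Dm: "\<And>h. (\<lambda>x. Dq \<theta>0 x h) \<in> borel_measurable M"
    and bd: "\<And>\<theta> x h. x \<in> space M \<Longrightarrow> dist \<theta> \<theta>0 < 1 \<Longrightarrow> \<bar>Dq \<theta> x h\<bar> \<le> K * norm h"
  shows "((\<lambda>\<theta>. \<integral>x. q \<theta> x \<partial>M) has_derivative (\<lambda>h. \<integral>x. Dq \<theta>0 x h \<partial>M)) (at \<theta>0)"
proof -
  interpret finite_measure M by (rule fin)
  have lin: "bounded_linear (Dq \<theta>0 x)" if "x \<in> space M" for x
    using der[OF that, of \<theta>0] has_derivative_bounded_linear by auto
  have intD: "integrable M (\<lambda>x. Dq \<theta>0 x h)" for h
    by (rule integrable_const_bound[where B="K * norm h"]) (use bd Dm in auto)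
  have BL: "bounded_linear (\<lambda>h. \<integral>x. Dq \<theta>0 x h \<partial>M)"
  proof (rule bounded_linear_intro[where K="K * measure M (space M)"])
    fix h1 h2
    have "(\<integral>x. Dq \<theta>0 x (h1 + h2) \<partial>M) = (\<integral>x. Dq \<theta>0 x h1 + Dq \<theta>0 x h2 \<partial>M)"
      by (rule Bochner_Integration.integral_cong) (auto simp: linear_add[OF bounded_linear.linear[OF lin]])
    also have "\<dots> = (\<integral>x. Dq \<theta>0 x h1 \<partial>M) + (\<integral>x. Dq \<theta>0 x h2 \<partial>M)"
      by (rule Bochner_Integration.integral_add[OF intD intD])
    finally show "(\<integral>x. Dq \<theta>0 x (h1 + h2) \<partial>M) = (\<integral>x. Dq \<theta>0 x h1 \<partial>M) + (\<integral>x. Dq \<theta>0 x h2 \<partial>M)" .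
  next
    fix r h
    have "(\<integral>x. Dq \<theta>0 x (r *\<^sub>R h) \<partial>M) = (\<integral>x. r * Dq \<theta>0 x h \<partial>M)"
      by (rule Bochner_Integration.integral_cong) (auto simp: linear_scale[OF bounded_linear.linear[OF lin]])
    then show "(\<integral>x. Dq \<theta>0 x (r *\<^sub>R h) \<partial>M) = r *\<^sub>R (\<integral>x. Dq \<theta>0 x h \<partial>M)" by simp
  next
    fix h
    have "norm (\<integral>x. Dq \<theta>0 x h \<partial>M) \<le> (\<integral>x. norm (Dq \<theta>0 x h) \<partial>M)"
      by (rule Bochner_Integration.integral_norm_bound)
    also have "\<dots> \<le> (\<integral>x. K * norm h \<partial>M)"
      by (rule Bochner_Integration.integral_mono) (use intD bd in auto)
    also have "\<dots> = norm h * (K * measure M (space M))" by simp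
    finally show "norm (\<integral>x. Dq \<theta>0 x h \<partial>M) \<le> norm h * (K * measure M (space M))" .
  qed
  show ?thesis
    unfolding has_derivative_iff_norm
  proof (intro conjI BL, subst tendsto_at_iff_sequentially, intro allI impI)
    fix X assume X: "\<forall>i. X i \<in> UNIV - {\<theta>0}" and lim: "X \<longlonglongrightarrow> \<theta>0"
    obtain N where N: "\<And>i. i \<ge> N \<Longrightarrow> dist (X i) \<theta>0 < 1"
      using lim unfolding LIMSEQ_def by (meson zero_less_one)
    define Y where "Y i = X (i + N)" for i
    have Yne: "Y i \<noteq> \<theta>0" for i using X by (auto simp: Y_def)
    have Yd: "dist (Y i) \<theta>0 < 1" for i using N by (auto simp: Y_def)
    have Ylim: "Y \<longlonglongrightarrow> \<theta>0" unfolding Y_def by (rule LIMSEQ_ignore_initial_segment[OF lim])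
    define s where "s i x = (q (Y i) x - q \<theta>0 x - Dq \<theta>0 x (Y i - \<theta>0)) / norm (Y i - \<theta>0)" for i x
    have sm: "s i \<in> borel_measurable M" for i
      unfolding s_def using qi intD by (intro borel_measurable_divide borel_measurable_diff) auto
    have slim: "AE x in M. (\<lambda>i. s i x) \<longlonglongrightarrow> 0"
    proof (rule AE_I2)
      fix x assume x: "x \<in> space M"
      have "((\<lambda>y. norm ((q y x - q \<theta>0 x) - Dq \<theta>0 x (y - \<theta>0)) / norm (y - \<theta>0)) \<longlongrightarrow> 0) (at \<theta>0)"
        using der[OF x, of \<theta>0] unfolding has_derivative_iff_norm by auto
      then have "((\<lambda>y. norm ((q y x - q \<theta>0 x) - Dq \<theta>0 x (y - \<theta>0)) / norm (y - \<theta>0)) \<circ> Y) \<longlonglongrightarrow> 0"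
        unfolding tendsto_at_iff_sequentially using Yne Ylim by auto
      then have "(\<lambda>i. norm (s i x)) \<longlonglongrightarrow> 0" by (simp add: s_def o_def)
      then show "(\<lambda>i. s i x) \<longlonglongrightarrow> 0" by (simp add: tendsto_rabs_zero_iff)
    qed
    have sbd: "AE x in M. norm (s i x) \<le> 2 * K" for i
    proof (rule AE_I2)
      fix x assume x: "x \<in> space M"
      have "norm ((\<lambda>\<theta>. q \<theta> x - Dq \<theta>0 x \<theta>) (Y i) - (\<lambda>\<theta>. q \<theta> x - Dq \<theta>0 x \<theta>) \<theta>0) \<le> (2 * K) * norm (Y i - \<theta>0)"
      proof (rule differentiable_bound[where S="ball \<theta>0 1" and f'="\<lambda>\<theta> h. Dq \<theta> x h - Dq \<theta>0 x h"])
        show "convex (ball \<theta>0 1)" by simp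
        show "Y i \<in> ball \<theta>0 1" "\<theta>0 \<in> ball \<theta>0 1" using Yd by (auto simp: dist_commute)
        fix \<theta> assume th: "\<theta> \<in> ball \<theta>0 1"
        show "((\<lambda>\<theta>. q \<theta> x - Dq \<theta>0 x \<theta>) has_derivative (\<lambda>h. Dq \<theta> x h - Dq \<theta>0 x h)) (at \<theta> within ball \<theta>0 1)"
          apply (rule has_derivative_at_withinI)
          apply (rule has_derivative_diff)
           apply (rule der[OF x]) using th apply (simp add: dist_commute)
          apply (rule bounded_linear.has_derivative[OF lin[OF x]])
          by (rule has_derivative_ident)
        show "onorm (\<lambda>h. Dq \<theta> x h - Dq \<theta>0 x h) \<le> 2 * K"
        proof (rule onorm_le)
          fix h
          have "\<bar>Dq \<theta> x h\<bar> \<le> K * norm h" using bd[OF x] th by (simp add: dist_commute)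
          moreover have "\<bar>Dq \<theta>0 x h\<bar> \<le> K * norm h" using bd[OF x] by simp
          ultimately show "norm (Dq \<theta> x h - Dq \<theta>0 x h) \<le> 2 * K * norm h" by simp
        qed
      qed
      moreover have "Dq \<theta>0 x (Y i - \<theta>0) = Dq \<theta>0 x (Y i) - Dq \<theta>0 x \<theta>0"
        by (rule linear_diff[OF bounded_linear.linear[OF lin[OF x]]])
      ultimately have "norm (q (Y i) x - q \<theta>0 x - Dq \<theta>0 x (Y i - \<theta>0)) \<le> 2 * K * norm (Y i - \<theta>0)"
        by (simp add: algebra_simps)
      moreover have "norm (Y i - \<theta>0) > 0" using Yne by simp
      ultimately show "norm (s i x) \<le> 2 * K"
        by (simp add: s_def divide_le_eq norm_divide)
    qed
    have "(\<lambda>i. \<integral>x. s i x \<partial>M) \<longlonglongrightarrow> (\<integral>x. 0 \<partial>M)"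
      by (rule integral_dominated_convergence[where w="\<lambda>_. 2 * K"]) (use sm slim sbd in auto)
    moreover have "(\<integral>x. s i x \<partial>M) = ((\<integral>x. q (Y i) x \<partial>M) - (\<integral>x. q \<theta>0 x \<partial>M) - (\<integral>x. Dq \<theta>0 x (Y i - \<theta>0) \<partial>M)) / norm (Y i - \<theta>0)" for i
      unfolding s_def using qi intD by simp
    ultimately have "(\<lambda>i. ((\<integral>x. q (Y i) x \<partial>M) - (\<integral>x. q \<theta>0 x \<partial>M) - (\<integral>x. Dq \<theta>0 x (Y i - \<theta>0) \<partial>M)) / norm (Y i - \<theta>0)) \<longlonglongrightarrow> 0"
      by simp
    from tendsto_rabs[OF this] have "(\<lambda>i. norm ((\<integral>x. q (Y i) x \<partial>M) - (\<integral>x. q \<theta>0 x \<partial>M) - (\<integral>x. Dq \<theta>0 x (Y i - \<theta>0) \<partial>M)) / norm (Y i - \<theta>0)) \<longlonglongrightarrow> 0"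
      by (simp add: abs_divide)
    then show "((\<lambda>y. norm ((\<integral>x. q y x \<partial>M) - (\<integral>x. q \<theta>0 x \<partial>M) - (\<integral>x. Dq \<theta>0 x (y - \<theta>0) \<partial>M)) / norm (y - \<theta>0)) \<circ> X) \<longlonglongrightarrow> 0"
      unfolding o_def Y_def by (rule LIMSEQ_offset)
  qed
qed



lemma ODE_sq:
  fixes g :: "real \<Rightarrow> real"
  assumes gm: "g \<in> borel_measurable borel" and t: "0 \<le> t" and gb: "\<And>s. s \<in> {0..t} \<Longrightarrow> \<bar>g s\<bar> \<le> B"
  shows "(x0 - (LINT u:{0..t}|lborel. g u))\<^sup>2 - x0\<^sup>2 =
         -2 * (LINT s:{0..t}|lborel. (x0 - (LINT u:{0..s}|lborel. g u)) * g s)"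
proof -
  define I where "I = {0..t}"
  define P where "P s = (LINT u:{0..s}|lborel. g u)" for s
  have gm'[measurable]: "g \<in> borel_measurable lborel" using gm by simp
  have SI: "set_integrable lborel A g" if A: "A \<in> sets borel" "A \<subseteq> I" for A
  proof -
    have "emeasure lborel A \<le> emeasure lborel I" using A by (intro emeasure_mono) (auto simp: I_def)
    also have "\<dots> < \<infinity>" using t by (simp add: I_def)
    finally show ?thesis unfolding set_integrable_def
      by (intro integrableI_bounded_set_indicator[where B=B]) (use A gb in \<open>auto simp: I_def intro!: AE_I2\<close>)
  qed
  have SBM: "set_borel_measurable lborel A g" if "A \<in> sets borel" for A
    unfolding set_borel_measurable_def using that by measurable
  have P1: "P s = (LINT u:{0..<s}|lborel. g u)" for s
    unfolding P_def
    by (rule set_integral_cong_set[OF SBM SBM]) (auto intro!: AE_I2 eventually_mono[OF AE_lborel_singleton[of s]])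
  have P2: "P t = P s + (LINT u:{s<..t}|lborel. g u)" if s: "s \<in> I" for s
  proof -
    have "{0..t} = {0..s} \<union> {s<..t}" using s by (auto simp: I_def)
    then have "P t = (LINT u:{0..s} \<union> {s<..t}|lborel. g u)" by (simp add: P_def)
    also have "\<dots> = P s + (LINT u:{s<..t}|lborel. g u)"
      unfolding P_def by (rule set_integral_Un) (use s in \<open>auto intro!: SI simp: I_def\<close>)
    finally show ?thesis .
  qed
  define f where "f s u = (if s \<in> I \<and> u \<in> I \<and> s < u then g s * g u else 0)" for s u
  have fint: "integrable (lborel \<Otimes>\<^sub>M lborel) (case_prod f)"
  proof (rule integrableI_bounded_set[where A="I \<times> I" and B="B * B"])
    show "I \<times> I \<in> sets (lborel \<Otimes>\<^sub>M lborel)" unfolding I_def by measurable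
    show "case_prod f \<in> borel_measurable (lborel \<Otimes>\<^sub>M lborel)" unfolding f_def I_def by measurable
    have "emeasure (lborel \<Otimes>\<^sub>M lborel) (I \<times> I) = emeasure lborel I * emeasure lborel I"
      by (rule lborel.emeasure_pair_measure_Times) (auto simp: I_def)
    then show "emeasure (lborel \<Otimes>\<^sub>M lborel) (I \<times> I) < \<infinity>" using t by (simp add: I_def ennreal_mult_less_top)
    show "AE x in lborel \<Otimes>\<^sub>M lborel. x \<in> I \<times> I \<longrightarrow> norm (case_prod f x) \<le> B * B"
    proof (intro AE_I2 impI)
      fix x :: "real \<times> real" assume "x \<in> I \<times> I"
      then obtain s u where x: "x = (s, u)" "s \<in> I" "u \<in> I" by auto
      have B0: "0 \<le> B" using gb[of s] x by (auto simp: I_def)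
      have "\<bar>g s\<bar> * \<bar>g u\<bar> \<le> B * B" using x gb B0 by (intro mult_mono) (auto simp: I_def)
      then show "norm (case_prod f x) \<le> B * B" using x B0 by (auto simp: f_def abs_mult)
    qed
    show "AE x in lborel \<Otimes>\<^sub>M lborel. x \<notin> I \<times> I \<longrightarrow> case_prod f x = 0"
      by (intro AE_I2) (auto simp: f_def split: if_splits)
  qed
  have in1: "(\<integral>s. f s u \<partial>lborel) = (if u \<in> I then g u * P u else 0)" for u
  proof (cases "u \<in> I")
    case True
    have "(\<integral>s. f s u \<partial>lborel) = (\<integral>s. (indicator {0..<u} s *\<^sub>R g s) * g u \<partial>lborel)"
      using True by (intro Bochner_Integration.integral_cong) (auto simp: f_def I_def indicator_def)
    also have "\<dots> = P u * g u" unfolding P1 set_lebesgue_integral_def by simp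
    finally show ?thesis using True by simp
  qed (simp add: f_def)
  have in2: "(\<integral>u. f s u \<partial>lborel) = (if s \<in> I then g s * (P t - P s) else 0)" for s
  proof (cases "s \<in> I")
    case True
    have "(\<integral>u. f s u \<partial>lborel) = (\<integral>u. g s * (indicator {s<..t} u *\<^sub>R g u) \<partial>lborel)"
      using True by (intro Bochner_Integration.integral_cong) (auto simp: f_def I_def indicator_def)
    also have "\<dots> = g s * (P t - P s)" using P2[OF True] unfolding set_lebesgue_integral_def by simp
    finally show ?thesis using True by simp
  qed (simp add: f_def)
  have fub: "(\<integral>u. (if u \<in> I then g u * P u else 0) \<partial>lborel) = (\<integral>s. (if s \<in> I then g s * (P t - P s) else 0) \<partial>lborel)"
    using lborel_pair.Fubini_integral[OF fint] by (simp add: in1 in2)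
  have int2: "integrable lborel (\<lambda>s. if s \<in> I then g s * (P t - P s) else 0)"
    using lborel_pair.integrable_fst'[OF fint] by (simp add: in2)
  have int3: "integrable lborel (\<lambda>s. if s \<in> I then g s * c else 0)" for c
  proof -
    have "integrable lborel (\<lambda>s. (indicator I s *\<^sub>R g s) * c)"
      using SI[of I] unfolding set_integrable_def by (intro integrable_mult_left) (auto simp: I_def)
    then show ?thesis by (rule Bochner_Integration.integrable_cong[THEN iffD1, rotated 2]) (auto simp: indicator_def)
  qed
  have J3: "(\<integral>s. (if s \<in> I then g s * c else 0) \<partial>lborel) = P t * c" for c
  proof -
    have "(\<integral>s. (if s \<in> I then g s * c else 0) \<partial>lborel) = (\<integral>s. (indicator I s *\<^sub>R g s) * c \<partial>lborel)"
      by (intro Bochner_Integration.integral_cong) (auto simp: indicator_def)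
    also have "\<dots> = P t * c" unfolding P_def set_lebesgue_integral_def I_def by simp
    finally show ?thesis .
  qed
  have split4: "(\<lambda>s. if s \<in> I then g s * P s else 0) = (\<lambda>s. (if s \<in> I then g s * P t else 0) - (if s \<in> I then g s * (P t - P s) else 0))"
    by (auto simp: algebra_simps)
  define X where "X = (\<integral>u. (if u \<in> I then g u * P u else 0) \<partial>lborel)"
  have int4: "integrable lborel (\<lambda>s. if s \<in> I then g s * P s else 0)"
    unfolding split4 using int2 int3 by (intro Bochner_Integration.integrable_diff)
  have "(\<integral>s. (if s \<in> I then g s * (P t - P s) else 0) \<partial>lborel) =
     (\<integral>s. (if s \<in> I then g s * P t else 0) - (if s \<in> I then g s * P s else 0) \<partial>lborel)"
    by (intro Bochner_Integration.integral_cong) (auto simp: algebra_simps)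
  also have "\<dots> = P t * P t - X"
    by (simp add: Bochner_Integration.integral_diff[OF int3 int4] J3 X_def)
  finally have XX: "X = P t * P t - X" using fub by (simp add: X_def)
  have "(LINT s:{0..t}|lborel. (x0 - P s) * g s) =
     (\<integral>s. (if s \<in> I then g s * x0 else 0) - (if s \<in> I then g s * P s else 0) \<partial>lborel)"
    unfolding set_lebesgue_integral_def
    by (intro Bochner_Integration.integral_cong) (auto simp: algebra_simps I_def indicator_def)
  also have "\<dots> = P t * x0 - X"
    by (simp add: Bochner_Integration.integral_diff[OF int3 int4] J3 X_def)
  finally have "(LINT s:{0..t}|lborel. (x0 - P s) * g s) = P t * x0 - X" .
  then show ?thesis unfolding P_def[symmetric] using XX by (simp add: power2_eq_square algebra_simps)
qed



definition Zf :: "(nat \<Rightarrow> 'n::finite) \<Rightarrow> nat \<Rightarrow> nat \<Rightarrow> real^'n \<Rightarrow> (nat \<Rightarrow> real) \<Rightarrow> nat \<Rightarrow> real" where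
  "Zf \<iota> d H \<theta> y i = bias \<iota> d H \<theta> i + (\<Sum>j = 1..d. wgt \<iota> d \<theta> i j * y j)"

definition Phif :: "(nat \<Rightarrow> 'n::finite) \<Rightarrow> nat \<Rightarrow> nat \<Rightarrow> ((nat \<Rightarrow> real) \<Rightarrow> real) \<Rightarrow> (real \<Rightarrow> real)
    \<Rightarrow> real^'n \<Rightarrow> (nat \<Rightarrow> real) \<Rightarrow> real" where
  "Phif \<iota> d H f Rf \<theta> y = f y - cout \<iota> d H \<theta>
            - (\<Sum>i = 1..H. outw \<iota> d H \<theta> i * Rf (bias \<iota> d H \<theta> i + (\<Sum>j = 1..d. wgt \<iota> d \<theta> i j * y j)))"

definition Dexpf :: "(nat \<Rightarrow> 'n::finite) \<Rightarrow> nat \<Rightarrow> nat \<Rightarrow> (real \<Rightarrow> real) \<Rightarrow> (real \<Rightarrow> real)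
    \<Rightarrow> real^'n \<Rightarrow> (nat \<Rightarrow> real) \<Rightarrow> real^'n \<Rightarrow> real" where
  "Dexpf \<iota> d H Rf Rd \<theta> y h = - cout \<iota> d H h
     - (\<Sum>i = 1..H. outw \<iota> d H h i * Rf (Zf \<iota> d H \<theta> y i)
          + outw \<iota> d H \<theta> i * Rd (Zf \<iota> d H \<theta> y i) * (bias \<iota> d H h i + (\<Sum>j = 1..d. wgt \<iota> d h i j * y j)))"

lemma Phif_Z: "Phif \<iota> d H f Rf \<theta> y = f y - cout \<iota> d H \<theta> - (\<Sum>i = 1..H. outw \<iota> d H \<theta> i * Rf (Zf \<iota> d H \<theta> y i))"
  by (simp add: Phif_def Zf_def)

lemma loss_eq: "ann_loss \<iota> d H f Rf \<mu> \<theta> = (\<integral>y. (Phif \<iota> d H f Rf \<theta> y)\<^sup>2 \<partial>\<mu>)"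
  by (simp add: ann_loss_def Phif_def)

lemma vec_nth_hd: "((\<lambda>x. x $ k) has_derivative (\<lambda>x. x $ k)) F"
  by (rule bounded_linear_imp_has_derivative[OF bounded_linear_vec_nth])

lemma Phif_deriv:
  assumes "\<And>x. (Rf has_real_derivative Rd x) (at x)"
  shows "((\<lambda>\<theta>. Phif \<iota> d H f Rf \<theta> y) has_derivative Dexpf \<iota> d H Rf Rd \<theta> y) (at \<theta>)"
proof -
  have Z: "((\<lambda>\<theta>. Zf \<iota> d H \<theta> y i) has_derivative (\<lambda>h. bias \<iota> d H h i + (\<Sum>j = 1..d. wgt \<iota> d h i j * y j))) (at \<theta>)" for i
    unfolding Zf_def bias_def wgt_def
    by (intro derivative_eq_intros) (auto intro!: vec_nth_hd)
  have R: "((\<lambda>\<theta>. Rf (Zf \<iota> d H \<theta> y i)) has_derivative (\<lambda>h. Rd (Zf \<iota> d H \<theta> y i) * (bias \<iota> d H h i + (\<Sum>j = 1..d. wgt \<iota> d h i j * y j)))) (at \<theta>)" for i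
    using has_derivative_compose[OF Z[of i] assms[of "Zf \<iota> d H \<theta> y i", unfolded has_field_derivative_def]]
    by (simp add: mult.commute)
  have O: "((\<lambda>\<theta>. outw \<iota> d H \<theta> i) has_derivative (\<lambda>h. outw \<iota> d H h i)) (at \<theta>)" for i
    unfolding outw_def by (rule vec_nth_hd)
  have C: "((\<lambda>\<theta>. cout \<iota> d H \<theta>) has_derivative (\<lambda>h. cout \<iota> d H h)) (at \<theta>)"
    unfolding cout_def by (rule vec_nth_hd)
  show ?thesis
    unfolding Phif_Z Dexpf_def
    apply (rule has_derivative_eq_rhs)
     apply (rule has_derivative_diff has_derivative_const C has_derivative_sum has_derivative_mult O R)+
    by (auto simp: algebra_simps fun_eq_iff)
qed

lemma widx_bound:
  assumes "1 \<le> i" "i \<le> H" "1 \<le> j" "j \<le> (d::nat)"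
  shows "1 \<le> (i - 1) * d + j" "(i - 1) * d + j \<le> H * d"
proof -
  show "1 \<le> (i - 1) * d + j" using assms by simp
  have "(i - 1) * d + j \<le> (i - 1) * d + d" using assms by simp
  also have "\<dots> = i * d" using assms by (cases i) auto
  also have "\<dots> \<le> H * d" using assms by simp
  finally show "(i - 1) * d + j \<le> H * d" .
qed

lemma widx_inj:
  assumes "1 \<le> i" "1 \<le> i'" "1 \<le> j" "j \<le> (d::nat)" "1 \<le> j'" "j' \<le> d"
    and eq: "(i - 1) * d + j = (i' - 1) * d + j'"
  shows "i = i' \<and> j = j'"
proof -
  have lt: False if "a < b" "1 \<le> a" "1 \<le> c" "c \<le> d" "1 \<le> e" "e \<le> d"
    "(a - 1) * d + c = (b - 1) * d + e" for a b c e :: nat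
  proof -
    have "(a - 1) * d + c \<le> (a - 1) * d + d" using that by simp
    also have "\<dots> = a * d" using that by (cases a) auto
    also have "\<dots> \<le> (b - 1) * d" using that by (intro mult_le_mono1) auto
    also have "\<dots> < (b - 1) * d + e" using that by simp
    finally show False using that by simp
  qed
  have "i = i'"
  proof (rule ccontr)
    assume "i \<noteq> i'"
    then consider "i < i'" | "i' < i" by linarith
    then show False
      by cases (use lt[of i i' j j'] lt[of i' i j' j] assms in auto)
  qed
  then show ?thesis using eq by simp
qed

definition evec :: "(nat \<Rightarrow> 'n::finite) \<Rightarrow> nat \<Rightarrow> nat \<Rightarrow> real^'n \<Rightarrow> nat \<Rightarrow> real^'n" where
  "evec \<iota> d H \<theta> i = (\<Sum>j = 1..d. wgt \<iota> d \<theta> i j *\<^sub>R axis (\<iota> ((i - 1) * d + j)) 1)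
      + bias \<iota> d H \<theta> i *\<^sub>R axis (\<iota> (H * d + i)) 1 - outw \<iota> d H \<theta> i *\<^sub>R axis (\<iota> (H * (d + 1) + i)) 1"

lemma sum_abs_le: "(\<And>i. i \<in> S \<Longrightarrow> \<bar>f i\<bar> \<le> (K::real)) \<Longrightarrow> \<bar>sum f S\<bar> \<le> real (card S) * K"
  by (rule order_trans[OF sum_abs]) (use sum_bounded_above[of S "\<lambda>i. \<bar>f i\<bar>" K] in auto)

lemma bounds:
  fixes \<theta> :: "real^'n" and y :: "nat \<Rightarrow> real"
  assumes y: "\<And>j. j \<in> {1..d} \<Longrightarrow> \<bar>y j\<bar> \<le> Ay" and Ay: "0 \<le> Ay"
    and T: "\<And>k. \<bar>\<theta> $ k\<bar> \<le> T"
    and RA: "\<And>z. \<bar>z\<bar> \<le> T + real d * T * Ay \<Longrightarrow> \<bar>Rf z\<bar> \<le> A \<and> \<bar>Rd z\<bar> \<le> A"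
    and fy: "\<bar>f y\<bar> \<le> Mf"
  shows "\<bar>Zf \<iota> d H \<theta> y i\<bar> \<le> T + real d * T * Ay"
    and "\<bar>Phif \<iota> d H f Rf \<theta> y\<bar> \<le> Mf + T + real H * (T * A)"
    and "\<bar>Dexpf \<iota> d H Rf Rd \<theta> y h\<bar> \<le> (1 + real H * (A + T * A * (1 + real d * Ay))) * norm h"
proof -
  have T0: "0 \<le> T" using T[of undefined] by linarith
  have Zb: "\<bar>Zf \<iota> d H \<theta> y i\<bar> \<le> T + real d * T * Ay" for i
  proof -
    have "\<bar>\<Sum>j = 1..d. wgt \<iota> d \<theta> i j * y j\<bar> \<le> real (card {1..d}) * (T * Ay)"
      by (intro sum_abs_le) (auto simp: abs_mult wgt_def intro!: mult_mono T y Ay T0)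
    moreover have "\<bar>bias \<iota> d H \<theta> i\<bar> \<le> T" by (simp add: bias_def T)
    ultimately show ?thesis unfolding Zf_def by (simp add: mult.assoc)
  qed
  then show "\<bar>Zf \<iota> d H \<theta> y i\<bar> \<le> T + real d * T * Ay" .
  have A0: "0 \<le> A" using RA[of 0] T0 Ay by (auto intro: order_trans[OF abs_ge_zero])
  have "\<bar>\<Sum>i = 1..H. outw \<iota> d H \<theta> i * Rf (Zf \<iota> d H \<theta> y i)\<bar> \<le> real (card {1..H}) * (T * A)"
    by (intro sum_abs_le) (auto simp: abs_mult outw_def intro!: mult_mono T A0 T0 RA[THEN conjunct1] Zb)
  moreover have "\<bar>cout \<iota> d H \<theta>\<bar> \<le> T" by (simp add: cout_def T)
  ultimately show "\<bar>Phif \<iota> d H f Rf \<theta> y\<bar> \<le> Mf + T + real H * (T * A)"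
    unfolding Phif_Z using fy by simp
  have nh: "\<bar>h $ k\<bar> \<le> norm h" for k by (rule component_le_norm_cart)
  have nh0: "0 \<le> norm h" by simp
  have inner: "\<bar>bias \<iota> d H h i + (\<Sum>j = 1..d. wgt \<iota> d h i j * y j)\<bar> \<le> norm h * (1 + real d * Ay)" for i
  proof -
    have "\<bar>\<Sum>j = 1..d. wgt \<iota> d h i j * y j\<bar> \<le> real (card {1..d}) * (norm h * Ay)"
      by (intro sum_abs_le) (auto simp: abs_mult wgt_def intro!: mult_mono nh y Ay)
    moreover have "\<bar>bias \<iota> d H h i\<bar> \<le> norm h" by (simp add: bias_def nh)
    ultimately show ?thesis by (simp add: algebra_simps)
  qed
  have trm: "\<bar>outw \<iota> d H h i * Rf (Zf \<iota> d H \<theta> y i)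
          + outw \<iota> d H \<theta> i * Rd (Zf \<iota> d H \<theta> y i) * (bias \<iota> d H h i + (\<Sum>j = 1..d. wgt \<iota> d h i j * y j))\<bar>
        \<le> (A + T * A * (1 + real d * Ay)) * norm h" for i
  proof -
    have 1: "\<bar>outw \<iota> d H h i * Rf (Zf \<iota> d H \<theta> y i)\<bar> \<le> norm h * A"
      by (auto simp: abs_mult outw_def intro!: mult_mono nh RA[THEN conjunct1] Zb A0)
    have "\<bar>outw \<iota> d H \<theta> i * Rd (Zf \<iota> d H \<theta> y i)\<bar> \<le> T * A"
      by (auto simp: abs_mult outw_def intro!: mult_mono T RA[THEN conjunct2] Zb A0 T0)
    then have 2: "\<bar>outw \<iota> d H \<theta> i * Rd (Zf \<iota> d H \<theta> y i) * (bias \<iota> d H h i + (\<Sum>j = 1..d. wgt \<iota> d h i j * y j))\<bar>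
        \<le> (T * A) * (norm h * (1 + real d * Ay))"
      unfolding abs_mult[of "_ * _"] by (intro mult_mono inner) (auto intro!: mult_nonneg_nonneg T0 A0)
    show ?thesis using 1 2 by (simp add: algebra_simps)
  qed
  have "\<bar>Dexpf \<iota> d H Rf Rd \<theta> y h\<bar> \<le> norm h + real (card {1..H}) * ((A + T * A * (1 + real d * Ay)) * norm h)"
  proof -
    have "\<bar>\<Sum>i = 1..H. outw \<iota> d H h i * Rf (Zf \<iota> d H \<theta> y i)
          + outw \<iota> d H \<theta> i * Rd (Zf \<iota> d H \<theta> y i) * (bias \<iota> d H h i + (\<Sum>j = 1..d. wgt \<iota> d h i j * y j))\<bar>
         \<le> real (card {1..H}) * ((A + T * A * (1 + real d * Ay)) * norm h)"
      by (rule sum_abs_le) (rule trm)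
    then show ?thesis unfolding Dexpf_def using nh[of "\<iota> (d * H + 2 * H + 1)"]
      by (simp add: cout_def)
  qed
  then show "\<bar>Dexpf \<iota> d H Rf Rd \<theta> y h\<bar> \<le> (1 + real H * (A + T * A * (1 + real d * Ay))) * norm h"
    by (simp add: algebra_simps)
qed

locale idx =
  fixes \<iota> :: "nat \<Rightarrow> 'n::finite" and d H :: nat
  assumes d1: "d \<ge> 1" and inj: "inj_on \<iota> {1 .. d * H + 2 * H + 1}"
begin

lemma ieq: "a \<in> {1 .. d * H + 2 * H + 1} \<Longrightarrow> m \<in> {1 .. d * H + 2 * H + 1} \<Longrightarrow> (\<iota> a = \<iota> m) = (a = m)"
  using inj by (auto dest: inj_onD)

lemma evec_nth:
  assumes i: "i \<in> {1..H}" and m: "m \<in> {1 .. d * H + 2 * H + 1}"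
  shows "evec \<iota> d H \<theta> i $ \<iota> m = (\<Sum>j = 1..d. wgt \<iota> d \<theta> i j * (if (i - 1) * d + j = m then 1 else 0))
     + bias \<iota> d H \<theta> i * (if H * d + i = m then 1 else 0) - outw \<iota> d H \<theta> i * (if H * (d + 1) + i = m then 1 else 0)"
proof -
  have w: "\<iota> ((i - 1) * d + j) = \<iota> m \<longleftrightarrow> (i - 1) * d + j = m" if "j \<in> {1..d}" for j
    using widx_bound[of i H j d] i that by (intro ieq m) (auto simp: algebra_simps)
  have b: "\<iota> (H * d + i) = \<iota> m \<longleftrightarrow> H * d + i = m" using i by (intro ieq m) (auto simp: algebra_simps)
  have v: "\<iota> (H * (d + 1) + i) = \<iota> m \<longleftrightarrow> H * (d + 1) + i = m" using i by (intro ieq m) (auto simp: algebra_simps)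
  have S: "(\<Sum>j = 1..d. wgt \<iota> d \<theta> i j *\<^sub>R axis (\<iota> ((i - 1) * d + j)) (1::real)) $ \<iota> m
     = (\<Sum>j = 1..d. wgt \<iota> d \<theta> i j * (if (i - 1) * d + j = m then 1 else 0))"
    unfolding sum_component
  proof (intro sum.cong refl)
    fix j assume j: "j \<in> {1..d}"
    show "(wgt \<iota> d \<theta> i j *\<^sub>R axis (\<iota> ((i - 1) * d + j)) (1::real)) $ \<iota> m = wgt \<iota> d \<theta> i j * (if (i - 1) * d + j = m then 1 else 0)"
      using w[OF j] by (simp add: axis_def eq_commute[of "\<iota> m"])
  qed
  show ?thesis
    unfolding evec_def vector_add_component vector_minus_component S
    apply (simp only: axis_def vector_scaleR_component vec_lambda_beta)
    apply (subst (1 2) eq_commute[of "\<iota> m"])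
    apply (simp only: b v real_scaleR_def)
    done
qed

lemma ew:
  assumes i: "i \<in> {1..H}" and i': "i' \<in> {1..H}" and j': "j' \<in> {1..d}"
  shows "wgt \<iota> d (evec \<iota> d H \<theta> i) i' j' = (if i' = i then wgt \<iota> d \<theta> i j' else 0)"
proof -
  define m where "m = (i' - 1) * d + j'"
  have mb: "1 \<le> m" "m \<le> H * d" using widx_bound[of i' H j' d] i' j' by (auto simp: m_def)
  then have m: "m \<in> {1 .. d * H + 2 * H + 1}" by (auto simp: algebra_simps)
  have "wgt \<iota> d (evec \<iota> d H \<theta> i) i' j' = (\<Sum>j = 1..d. wgt \<iota> d \<theta> i j * (if (i - 1) * d + j = m then 1 else 0))"
    unfolding wgt_def[of _ _ "evec _ _ _ _ _"] m_def[symmetric] evec_nth[OF i m] using mb i by (auto simp: algebra_simps)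
  also have "\<dots> = (\<Sum>j = 1..d. if j = j' \<and> i' = i then wgt \<iota> d \<theta> i j else 0)"
  proof (intro sum.cong refl)
    fix j assume j: "j \<in> {1..d}"
    have "((i - 1) * d + j = m) = (i = i' \<and> j = j')"
      using widx_inj[of i i' j d j'] i i' j j' unfolding m_def by auto
    then show "wgt \<iota> d \<theta> i j * (if (i - 1) * d + j = m then 1 else 0) = (if j = j' \<and> i' = i then wgt \<iota> d \<theta> i j else 0)"
      by auto
  qed
  also have "\<dots> = (if i' = i then wgt \<iota> d \<theta> i j' else 0)"
    using j' by (cases "i' = i") (simp_all add: sum.delta)
  finally show ?thesis .
qed

lemma eb:
  assumes i: "i \<in> {1..H}" and i': "i' \<in> {1..H}"
  shows "bias \<iota> d H (evec \<iota> d H \<theta> i) i' = (if i' = i then bias \<iota> d H \<theta> i else 0)"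
proof -
  define m where "m = H * d + i'"
  have m: "m \<in> {1 .. d * H + 2 * H + 1}" using i' by (auto simp: m_def algebra_simps)
  have z: "(\<Sum>j = 1..d. wgt \<iota> d \<theta> i j * (if (i - 1) * d + j = m then 1 else 0)) = 0"
  proof (intro sum.neutral ballI)
    fix j assume j: "j \<in> {1..d}"
    have "(i - 1) * d + j \<le> H * d" using widx_bound[of i H j d] i j by auto
    then show "wgt \<iota> d \<theta> i j * (if (i - 1) * d + j = m then 1 else 0) = 0" using i' by (auto simp: m_def)
  qed
  show ?thesis
    unfolding bias_def[of _ _ _ "evec _ _ _ _ _"] m_def[symmetric] evec_nth[OF i m] z
    using i i' by (auto simp: m_def algebra_simps bias_def)
qed

lemma ev:
  assumes i: "i \<in> {1..H}" and i': "i' \<in> {1..H}"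
  shows "outw \<iota> d H (evec \<iota> d H \<theta> i) i' = (if i' = i then - outw \<iota> d H \<theta> i else 0)"
proof -
  define m where "m = H * (d + 1) + i'"
  have m: "m \<in> {1 .. d * H + 2 * H + 1}" using i' by (auto simp: m_def algebra_simps)
  have z: "(\<Sum>j = 1..d. wgt \<iota> d \<theta> i j * (if (i - 1) * d + j = m then 1 else 0)) = 0"
  proof (intro sum.neutral ballI)
    fix j assume j: "j \<in> {1..d}"
    have "(i - 1) * d + j \<le> H * d" using widx_bound[of i H j d] i j by auto
    then show "wgt \<iota> d \<theta> i j * (if (i - 1) * d + j = m then 1 else 0) = 0" using i' by (auto simp: m_def)
  qed
  show ?thesis
    unfolding outw_def[of _ _ _ "evec _ _ _ _ _"] m_def[symmetric] evec_nth[OF i m] z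
    using i i' by (auto simp: m_def algebra_simps outw_def)
qed

lemma ec:
  assumes i: "i \<in> {1..H}"
  shows "cout \<iota> d H (evec \<iota> d H \<theta> i) = 0"
proof -
  define m where "m = d * H + 2 * H + 1"
  have m: "m \<in> {1 .. d * H + 2 * H + 1}" by (auto simp: m_def)
  have z: "(\<Sum>j = 1..d. wgt \<iota> d \<theta> i j * (if (i - 1) * d + j = m then 1 else 0)) = 0"
  proof (intro sum.neutral ballI)
    fix j assume j: "j \<in> {1..d}"
    have "(i - 1) * d + j \<le> H * d" using widx_bound[of i H j d] i j by auto
    then show "wgt \<iota> d \<theta> i j * (if (i - 1) * d + j = m then 1 else 0) = 0" by (auto simp: m_def algebra_simps)
  qed
  show ?thesis
    unfolding cout_def[of _ _ _ "evec _ _ _ _ _"] m_def[symmetric] evec_nth[OF i m] z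
    using i by (auto simp: m_def algebra_simps)
qed

lemma Dexp_evec:
  assumes i: "i \<in> {1..H}"
  shows "Dexpf \<iota> d H Rf Rd \<theta> y (evec \<iota> d H \<theta> i) =
     outw \<iota> d H \<theta> i * (Rf (Zf \<iota> d H \<theta> y i) - Rd (Zf \<iota> d H \<theta> y i) * Zf \<iota> d H \<theta> y i)"
proof -
  have "(\<Sum>i' = 1..H. outw \<iota> d H (evec \<iota> d H \<theta> i) i' * Rf (Zf \<iota> d H \<theta> y i')
          + outw \<iota> d H \<theta> i' * Rd (Zf \<iota> d H \<theta> y i') * (bias \<iota> d H (evec \<iota> d H \<theta> i) i' + (\<Sum>j = 1..d. wgt \<iota> d (evec \<iota> d H \<theta> i) i' j * y j)))
      = (\<Sum>i' = 1..H. if i' = i then - outw \<iota> d H \<theta> i * Rf (Zf \<iota> d H \<theta> y i)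
          + outw \<iota> d H \<theta> i * Rd (Zf \<iota> d H \<theta> y i) * Zf \<iota> d H \<theta> y i else 0)"
  proof (intro sum.cong refl)
    fix i' assume i': "i' \<in> {1..H}"
    have "(\<Sum>j = 1..d. wgt \<iota> d (evec \<iota> d H \<theta> i) i' j * y j) = (\<Sum>j = 1..d. (if i' = i then wgt \<iota> d \<theta> i j else 0) * y j)"
      by (intro sum.cong refl) (simp add: ew[OF i i'])
    then show "outw \<iota> d H (evec \<iota> d H \<theta> i) i' * Rf (Zf \<iota> d H \<theta> y i')
          + outw \<iota> d H \<theta> i' * Rd (Zf \<iota> d H \<theta> y i') * (bias \<iota> d H (evec \<iota> d H \<theta> i) i' + (\<Sum>j = 1..d. wgt \<iota> d (evec \<iota> d H \<theta> i) i' j * y j))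
        = (if i' = i then - outw \<iota> d H \<theta> i * Rf (Zf \<iota> d H \<theta> y i)
          + outw \<iota> d H \<theta> i * Rd (Zf \<iota> d H \<theta> y i) * Zf \<iota> d H \<theta> y i else 0)"
      by (simp add: ev[OF i i'] eb[OF i i'] Zf_def)
  qed
  also have "\<dots> = - outw \<iota> d H \<theta> i * Rf (Zf \<iota> d H \<theta> y i) + outw \<iota> d H \<theta> i * Rd (Zf \<iota> d H \<theta> y i) * Zf \<iota> d H \<theta> y i"
    using i by (simp add: sum.delta)
  finally show ?thesis unfolding Dexpf_def ec[OF i] by (simp add: algebra_simps)
qed

end



lemma space_mu:
  assumes "sets \<mu> = sets (restrict_space (Pi\<^sub>M {1..d} (\<lambda>_. borel)) ({1..d} \<rightarrow>\<^sub>E {a..b::real}))"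
  shows "space \<mu> = ({1..d} \<rightarrow>\<^sub>E {a..b})"
  using sets_eq_imp_space_eq[OF assms] by (auto simp: space_restrict_space space_PiM PiE_def Pi_def)

lemma meas_coord:
  assumes "sets \<mu> = sets (restrict_space (Pi\<^sub>M {1..d} (\<lambda>_. borel)) ({1..d} \<rightarrow>\<^sub>E {a..b::real}))"
  shows "(\<lambda>y. y j) \<in> borel_measurable \<mu>"
proof (cases "j \<in> {1..d}")
  case True
  have "(\<lambda>y. y j) \<in> borel_measurable (restrict_space (Pi\<^sub>M {1..d} (\<lambda>_. borel)) ({1..d} \<rightarrow>\<^sub>E {a..b::real}))"
    by (rule measurable_restrict_space1) (rule measurable_component_singleton[OF True])
  then show ?thesis by (subst measurable_cong_sets[OF assms refl])
next
  case False
  have "(\<lambda>y. y j) \<in> borel_measurable \<mu> \<longleftrightarrow> (\<lambda>y. undefined :: real) \<in> borel_measurable \<mu>"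
    by (rule Sigma_Algebra.measurable_cong) (use False in \<open>auto simp: space_mu[OF assms] PiE_def extensional_def\<close>)
  then show ?thesis by simp
qed

lemma meas_f:
  assumes S: "sets \<mu> = sets (restrict_space (Pi\<^sub>M {1..d} (\<lambda>_. borel)) ({1..d} \<rightarrow>\<^sub>E {a..b::real}))"
    and f: "continuous_on ({1..d} \<rightarrow>\<^sub>E {a..b}) f"
  shows "(f :: (nat \<Rightarrow> real) \<Rightarrow> real) \<in> borel_measurable \<mu>"
proof -
  have f': "f \<in> borel_measurable (restrict_space borel ({1..d} \<rightarrow>\<^sub>E {a..b}))"
    by (rule borel_measurable_continuous_on_restrict[OF f])
  have "(\<lambda>y. y) \<in> borel_measurable \<mu>"
    by (rule measurable_coordinatewise_then_product) (rule meas_coord[OF S])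
  then have "(\<lambda>y. y) \<in> measurable \<mu> (restrict_space borel ({1..d} \<rightarrow>\<^sub>E {a..b}))"
    by (rule measurable_restrict_space2[rotated]) (simp add: space_mu[OF S])
  from measurable_compose[OF this f'] show ?thesis by simp
qed

lemma compact_cube: "compact ({1..d} \<rightarrow>\<^sub>E {a..b::real})"
proof -
  have eq: "({1..d} \<rightarrow>\<^sub>E {a..b::real}) = PiE UNIV (\<lambda>j. if j \<in> {1..d} then {a..b} else {undefined})"
    by (auto simp: PiE_def Pi_def extensional_def split: if_splits)
  have "compactin (product_topology (\<lambda>_. euclidean) UNIV) (PiE UNIV (\<lambda>j. if j \<in> {1..d} then {a..b::real} else {undefined}))"
    by (subst compactin_PiE) auto
  then show ?thesis unfolding eq euclidean_product_topology by simp
qed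

lemma f_bounded:
  assumes f: "continuous_on ({1..d} \<rightarrow>\<^sub>E {a..b::real}) (f :: (nat \<Rightarrow> real) \<Rightarrow> real)"
  shows "\<exists>Mf. \<forall>y \<in> ({1..d} \<rightarrow>\<^sub>E {a..b}). \<bar>f y\<bar> \<le> Mf"
  using compact_imp_bounded[OF compact_continuous_image[OF f compact_cube]]
  unfolding bounded_iff by auto

lemma meas_Phi:
  assumes S: "sets \<mu> = sets (restrict_space (Pi\<^sub>M {1..d} (\<lambda>_. borel)) ({1..d} \<rightarrow>\<^sub>E {a..b::real}))"
    and fm: "f \<in> borel_measurable \<mu>" and Rm: "Rf \<in> borel_measurable borel"
  shows "(\<lambda>y. Phif \<iota> d H f Rf \<theta> y) \<in> borel_measurable \<mu>"
proof -
  have [measurable]: "(\<lambda>y. y j) \<in> borel_measurable \<mu>" for j by (rule meas_coord[OF S])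
  note [measurable] = fm Rm
  show ?thesis unfolding Phif_def by measurable
qed

lemma meas_Dexp:
  assumes S: "sets \<mu> = sets (restrict_space (Pi\<^sub>M {1..d} (\<lambda>_. borel)) ({1..d} \<rightarrow>\<^sub>E {a..b::real}))"
    and Rm: "Rf \<in> borel_measurable borel" and Dm: "Rd \<in> borel_measurable borel"
  shows "(\<lambda>y. Dexpf \<iota> d H Rf Rd \<theta> y h) \<in> borel_measurable \<mu>"
proof -
  have [measurable]: "(\<lambda>y. y j) \<in> borel_measurable \<mu>" for j by (rule meas_coord[OF S])
  note [measurable] = Rm Dm
  show ?thesis unfolding Dexpf_def Zf_def by measurable
qed



locale NN = idx \<iota> d H for \<iota> :: "nat \<Rightarrow> 'n::finite" and d H +
  fixes a b :: real and f :: "(nat \<Rightarrow> real) \<Rightarrow> real" and R :: "nat \<Rightarrow> real \<Rightarrow> real"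
    and \<mu> :: "(nat \<Rightarrow> real) measure"
  assumes fc: "continuous_on ({1..d} \<rightarrow>\<^sub>E {a..b}) f"
    and R_C1: "\<forall>r\<ge>1. (\<forall>x. R r differentiable at x) \<and> continuous_on UNIV (deriv (R r))"
    and R_lim: "\<forall>x. (\<lambda>r. \<bar>R r x - max x 0\<bar> + \<bar>deriv (R r) x - indicator {0<..} x\<bar>) \<longlonglongrightarrow> 0"
    and R_bd: "\<forall>x. \<exists>C. \<forall>r\<ge>1. \<forall>y\<in>{-\<bar>x\<bar>..\<bar>x\<bar>}. \<bar>deriv (R r) y\<bar> \<le> C"
    and fin: "finite_measure \<mu>"
    and S: "sets \<mu> = sets (restrict_space (Pi\<^sub>M {1..d} (\<lambda>_. borel)) ({1..d} \<rightarrow>\<^sub>E {a..b}))"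
begin

interpretation finite_measure \<mu> by (rule fin)

lemma yb: "y \<in> space \<mu> \<Longrightarrow> j \<in> {1..d} \<Longrightarrow> \<bar>y j\<bar> \<le> \<bar>a\<bar> + \<bar>b\<bar>"
  unfolding space_mu[OF S] by (auto simp: PiE_def Pi_def abs_le_iff)

lemma fb: obtains Mf where "\<And>y. y \<in> space \<mu> \<Longrightarrow> \<bar>f y\<bar> \<le> Mf"
  using f_bounded[OF fc] unfolding space_mu[OF S] by blast

lemma fm: "f \<in> borel_measurable \<mu>" by (rule meas_f[OF S fc])

lemma Rder: "r \<ge> 1 \<Longrightarrow> (R r has_real_derivative deriv (R r) x) (at x)"
  using R_C1 DERIV_deriv_iff_real_differentiable by blast

lemma Rcont: "r \<ge> 1 \<Longrightarrow> continuous_on UNIV (R r)"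
  by (rule continuous_on_subset[of UNIV], rule differentiable_imp_continuous_on)
     (use R_C1 in \<open>auto simp: differentiable_on_def intro: differentiable_at_withinI\<close>)

lemma Rm: "r \<ge> 1 \<Longrightarrow> R r \<in> borel_measurable borel"
  by (rule borel_measurable_continuous_onI[OF Rcont])

lemma Dm: "r \<ge> 1 \<Longrightarrow> deriv (R r) \<in> borel_measurable borel"
  by (rule borel_measurable_continuous_onI) (use R_C1 in auto)

lemma Rbnd: assumes "r \<ge> 1" shows "\<exists>A. \<forall>z. \<bar>z\<bar> \<le> M \<longrightarrow> \<bar>R r z\<bar> \<le> A \<and> \<bar>deriv (R r) z\<bar> \<le> A"
proof -
  have "compact (R r ` {-M..M})" "compact (deriv (R r) ` {-M..M})"
    using Rcont[OF assms] R_C1 assms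
    by (auto intro!: compact_continuous_image intro: continuous_on_subset)
  then obtain A1 A2 where "\<forall>x\<in>{-M..M}. \<bar>R r x\<bar> \<le> A1" "\<forall>x\<in>{-M..M}. \<bar>deriv (R r) x\<bar> \<le> A2"
    unfolding bounded_iff[symmetric] by (metis bounded_iff compact_imp_bounded image_eqI real_norm_def)
  then show ?thesis by (intro exI[of _ "max A1 A2"]) (auto simp: abs_le_iff le_max_iff_disj)
qed

lemma Phi_bound: assumes r: "r \<ge> 1"
  shows "\<exists>P. \<forall>y\<in>space \<mu>. \<bar>Phif \<iota> d H f (R r) \<theta> y\<bar> \<le> P"
proof -
  obtain Mf where Mf: "\<And>y. y \<in> space \<mu> \<Longrightarrow> \<bar>f y\<bar> \<le> Mf" using fb by blast
  define T where "T = norm \<theta>"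
  obtain A where A: "\<forall>z. \<bar>z\<bar> \<le> T + real d * T * (\<bar>a\<bar> + \<bar>b\<bar>) \<longrightarrow> \<bar>R r z\<bar> \<le> A \<and> \<bar>deriv (R r) z\<bar> \<le> A"
    using Rbnd[OF r] by blast
  show ?thesis
    by (rule exI[of _ "Mf + T + real H * (T * A)"], intro ballI bounds(2)[where Ay="\<bar>a\<bar> + \<bar>b\<bar>" and Rd="deriv (R r)"])
       (use yb Mf A in \<open>auto simp: T_def component_le_norm_cart\<close>)
qed

lemma loss_deriv:
  assumes r: "r \<ge> 1"
  shows "(ann_loss \<iota> d H f (R r) \<mu> has_derivative
     (\<lambda>h. \<integral>y. 2 * Phif \<iota> d H f (R r) \<theta>0 y * Dexpf \<iota> d H (R r) (deriv (R r)) \<theta>0 y h \<partial>\<mu>)) (at \<theta>0)"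
proof -
  have eq: "ann_loss \<iota> d H f (R r) \<mu> = (\<lambda>\<theta>. \<integral>y. (Phif \<iota> d H f (R r) \<theta> y)\<^sup>2 \<partial>\<mu>)"
    by (rule ext) (rule loss_eq)
  obtain Mf where Mf: "\<And>y. y \<in> space \<mu> \<Longrightarrow> \<bar>f y\<bar> \<le> Mf" using fb by blast
  define T where "T = norm \<theta>0 + 1"
  define Ay where "Ay = \<bar>a\<bar> + \<bar>b\<bar>"
  obtain A where A: "\<forall>z. \<bar>z\<bar> \<le> T + real d * T * Ay \<longrightarrow> \<bar>R r z\<bar> \<le> A \<and> \<bar>deriv (R r) z\<bar> \<le> A"
    using Rbnd[OF r] by blast
  have Tb: "\<bar>\<theta> $ k\<bar> \<le> T" if "dist \<theta> \<theta>0 < 1" for \<theta> k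
  proof -
    have "norm \<theta> \<le> norm \<theta>0 + dist \<theta> \<theta>0" by (metis dist_norm norm_triangle_sub add.commute)
    then show ?thesis using component_le_norm_cart[of \<theta> k] that by (simp add: T_def)
  qed
  show ?thesis unfolding eq
  proof (rule DUI[where K="2 * (Mf + T + real H * (T * A)) * (1 + real H * (A + T * A * (1 + real d * Ay)))"])
    show "finite_measure \<mu>" by (rule fin)
    fix \<theta> y assume y: "y \<in> space \<mu>" and th: "dist \<theta> \<theta>0 < 1"
    show "((\<lambda>\<theta>. (Phif \<iota> d H f (R r) \<theta> y)\<^sup>2) has_derivative (\<lambda>h. 2 * Phif \<iota> d H f (R r) \<theta> y * Dexpf \<iota> d H (R r) (deriv (R r)) \<theta> y h)) (at \<theta>)"
      by (rule has_derivative_eq_rhs, rule has_derivative_power[OF Phif_deriv[OF Rder[OF r]]]) (auto simp: fun_eq_iff)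
  next
    fix \<theta>
    obtain P where P: "\<forall>y\<in>space \<mu>. \<bar>Phif \<iota> d H f (R r) \<theta> y\<bar> \<le> P" using Phi_bound[OF r] by blast
    show "integrable \<mu> (\<lambda>y. (Phif \<iota> d H f (R r) \<theta> y)\<^sup>2)"
    proof (rule integrable_const_bound[where B="P * P"])
      show "AE x in \<mu>. norm ((Phif \<iota> d H f (R r) \<theta> x)\<^sup>2) \<le> P * P"
      proof (intro AE_I2)
        fix x assume "x \<in> space \<mu>"
        then have "\<bar>Phif \<iota> d H f (R r) \<theta> x\<bar> \<le> P" using P by auto
        from power_mono[OF this abs_ge_zero, of 2]
        show "norm ((Phif \<iota> d H f (R r) \<theta> x)\<^sup>2) \<le> P * P" by (simp add: power2_eq_square)
      qed
      show "(\<lambda>y. (Phif \<iota> d H f (R r) \<theta> y)\<^sup>2) \<in> borel_measurable \<mu>"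
        using meas_Phi[OF S fm Rm[OF r]] by measurable
    qed
  next
    fix h
    show "(\<lambda>y. 2 * Phif \<iota> d H f (R r) \<theta>0 y * Dexpf \<iota> d H (R r) (deriv (R r)) \<theta>0 y h) \<in> borel_measurable \<mu>"
      using meas_Phi[OF S fm Rm[OF r]] meas_Dexp[OF S Rm[OF r] Dm[OF r]] by measurable
  next
    fix \<theta> y h assume y: "y \<in> space \<mu>" and th: "dist \<theta> \<theta>0 < 1"
    have b1: "\<bar>Phif \<iota> d H f (R r) \<theta> y\<bar> \<le> Mf + T + real H * (T * A)"
      by (rule bounds(2)[where Ay=Ay and Rd="deriv (R r)"], use yb[OF y] Mf[OF y] A Tb[OF th] in \<open>auto simp: Ay_def\<close>)
    have b2: "\<bar>Dexpf \<iota> d H (R r) (deriv (R r)) \<theta> y h\<bar> \<le> (1 + real H * (A + T * A * (1 + real d * Ay))) * norm h"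
      by (rule bounds(3)[where Ay=Ay and f=f and Mf=Mf], use yb[OF y] Mf[OF y] A Tb[OF th] in \<open>auto simp: Ay_def\<close>)
    note b = b1 b2
    show "\<bar>2 * Phif \<iota> d H f (R r) \<theta> y * Dexpf \<iota> d H (R r) (deriv (R r)) \<theta> y h\<bar>
       \<le> 2 * (Mf + T + real H * (T * A)) * (1 + real H * (A + T * A * (1 + real d * Ay))) * norm h"
    proof -
      have m: "\<bar>Phif \<iota> d H f (R r) \<theta> y\<bar> * \<bar>Dexpf \<iota> d H (R r) (deriv (R r)) \<theta> y h\<bar>
          \<le> (Mf + T + real H * (T * A)) * ((1 + real H * (A + T * A * (1 + real d * Ay))) * norm h)"
        using mult_mono[OF b order_trans[OF abs_ge_zero b(1)] abs_ge_zero] .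
      have e1: "\<bar>2 * Phif \<iota> d H f (R r) \<theta> y * Dexpf \<iota> d H (R r) (deriv (R r)) \<theta> y h\<bar>
          = 2 * (\<bar>Phif \<iota> d H f (R r) \<theta> y\<bar> * \<bar>Dexpf \<iota> d H (R r) (deriv (R r)) \<theta> y h\<bar>)"
        by (simp add: abs_mult)
      have e2: "2 * (Mf + T + real H * (T * A)) * (1 + real H * (A + T * A * (1 + real d * Ay))) * norm h
          = 2 * ((Mf + T + real H * (T * A)) * ((1 + real H * (A + T * A * (1 + real d * Ay))) * norm h))"
        by (simp only: mult.assoc)
      show ?thesis unfolding e1 e2 using m by linarith
    qed
  qed
qed

lemma Rl: "(\<lambda>r. R (Suc r) z) \<longlonglongrightarrow> max z 0"
proof -
  have "(\<lambda>r. \<bar>R r z - max z 0\<bar>) \<longlonglongrightarrow> 0"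
    by (rule tendsto_sandwich[of "\<lambda>_. 0" _ _ "\<lambda>r. \<bar>R r z - max z 0\<bar> + \<bar>deriv (R r) z - indicator {0<..} z\<bar>"])
       (use R_lim in auto)
  then have "(\<lambda>r. R r z) \<longlonglongrightarrow> max z 0"
    by (simp add: tendsto_rabs_zero_iff LIM_zero_iff)
  then show ?thesis by (rule LIMSEQ_Suc)
qed

lemma Dl: "(\<lambda>r. deriv (R (Suc r)) z) \<longlonglongrightarrow> indicator {0<..} z"
proof -
  have "(\<lambda>r. \<bar>deriv (R r) z - indicator {0<..} z\<bar>) \<longlonglongrightarrow> 0"
    by (rule tendsto_sandwich[of "\<lambda>_. 0" _ _ "\<lambda>r. \<bar>R r z - max z 0\<bar> + \<bar>deriv (R r) z - indicator {0<..} z\<bar>"])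
       (use R_lim in auto)
  then have "(\<lambda>r. deriv (R r) z) \<longlonglongrightarrow> indicator {0<..} z"
    by (simp add: tendsto_rabs_zero_iff LIM_zero_iff)
  then show ?thesis by (rule LIMSEQ_Suc)
qed

lemma unif_bound: assumes M: "0 \<le> M"
  shows "\<exists>A. \<forall>r z. \<bar>z\<bar> \<le> M \<longrightarrow> \<bar>R (Suc r) z\<bar> \<le> A \<and> \<bar>deriv (R (Suc r)) z\<bar> \<le> A \<and>
      \<bar>max z 0\<bar> \<le> A \<and> \<bar>indicator {0<..} z :: real\<bar> \<le> A"
proof -
  obtain C where C0: "\<forall>r\<ge>1. \<forall>y\<in>{-\<bar>M\<bar>..\<bar>M\<bar>}. \<bar>deriv (R r) y\<bar> \<le> C"
    using R_bd by blast
  have C: "\<And>r y. r \<ge> 1 \<Longrightarrow> y \<in> {-M..M} \<Longrightarrow> \<bar>deriv (R r) y\<bar> \<le> C"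
    using C0 M by auto
  have "(\<lambda>r. R r 0) \<longlonglongrightarrow> max 0 0"
    using LIMSEQ_imp_Suc[OF Rl[of 0]] by simp
  then have "Bseq (\<lambda>r. R r 0)" by (intro convergent_imp_Bseq convergentI)
  then obtain B0 where B0: "\<And>r. \<bar>R r 0\<bar> \<le> B0" unfolding Bseq_def by (metis real_norm_def less_imp_le)
  have mv: "\<bar>R (Suc r) z\<bar> \<le> B0 + C * M" if z: "\<bar>z\<bar> \<le> M" for r z
  proof -
    have "norm (R (Suc r) z - R (Suc r) 0) \<le> C * norm (z - 0)"
    proof (rule differentiable_bound[where S="{-M..M}" and f'="\<lambda>x h. deriv (R (Suc r)) x * h"])
      show "convex {-M..M}" by simp
      show "z \<in> {-M..M}" "0 \<in> {-M..M}" using z M by auto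
      fix x assume x: "x \<in> {-M..M}"
      show "(R (Suc r) has_derivative (\<lambda>h. deriv (R (Suc r)) x * h)) (at x within {-M..M})"
        using Rder[of "Suc r" x] by (auto simp: has_field_derivative_def intro: has_derivative_at_withinI)
      show "onorm (\<lambda>h. deriv (R (Suc r)) x * h) \<le> C"
        by (rule onorm_le) (use C[of "Suc r" x] x in \<open>auto simp: abs_mult intro!: mult_right_mono\<close>)
    qed
    moreover have "C \<ge> 0" using C[of 1 0] M by (auto intro: order_trans[OF abs_ge_zero])
    ultimately have "\<bar>R (Suc r) z - R (Suc r) 0\<bar> \<le> C * M" using z
      by (auto intro: order_trans mult_left_mono)
    then show ?thesis using B0[of "Suc r"] by linarith
  qed
  show ?thesis
    apply (rule exI[of _ "max (B0 + C * M) (max C (M + 1))"])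
    using mv C M by (auto simp: le_max_iff_disj indicator_def)
qed

lemma conv:
  "(\<lambda>r. \<integral>y. 2 * Phif \<iota> d H f (R (Suc r)) \<theta> y * Dexpf \<iota> d H (R (Suc r)) (deriv (R (Suc r))) \<theta> y h \<partial>\<mu>)
     \<longlonglongrightarrow> (\<integral>y. 2 * Phif \<iota> d H f (\<lambda>x. max x 0) \<theta> y * Dexpf \<iota> d H (\<lambda>x. max x 0) (indicator {0<..}) \<theta> y h \<partial>\<mu>)"
proof -
  obtain Mf where Mf: "\<And>y. y \<in> space \<mu> \<Longrightarrow> \<bar>f y\<bar> \<le> Mf" using fb by blast
  define T where "T = norm \<theta>"
  define Ay where "Ay = \<bar>a\<bar> + \<bar>b\<bar>"
  define M where "M = T + real d * T * Ay"
  have M0: "0 \<le> M" by (simp add: M_def T_def Ay_def)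
  obtain A where A: "\<And>r z. \<bar>z\<bar> \<le> M \<Longrightarrow> \<bar>R (Suc r) z\<bar> \<le> A \<and> \<bar>deriv (R (Suc r)) z\<bar> \<le> A \<and>
      \<bar>max z 0\<bar> \<le> A \<and> \<bar>indicator {0<..} z :: real\<bar> \<le> A"
    using unif_bound[OF M0] by blast
  define K where "K = 2 * (Mf + T + real H * (T * A)) * ((1 + real H * (A + T * A * (1 + real d * Ay))) * norm h)"
  have Tb: "\<And>k. \<bar>\<theta> $ k\<bar> \<le> T" unfolding T_def by (rule component_le_norm_cart)
  have bnd: "\<bar>2 * Phif \<iota> d H f Rf \<theta> y * Dexpf \<iota> d H Rf Rd \<theta> y h\<bar> \<le> K"
    if y: "y \<in> space \<mu>" and RA: "\<And>z. \<bar>z\<bar> \<le> M \<Longrightarrow> \<bar>Rf z\<bar> \<le> A \<and> \<bar>Rd z\<bar> \<le> A" for Rf Rd y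
  proof -
    have b1: "\<bar>Phif \<iota> d H f Rf \<theta> y\<bar> \<le> Mf + T + real H * (T * A)"
      by (rule bounds(2)[where Ay=Ay and Rd=Rd], use yb[OF y] Mf[OF y] RA Tb in \<open>auto simp: Ay_def M_def\<close>)
    have b2: "\<bar>Dexpf \<iota> d H Rf Rd \<theta> y h\<bar> \<le> (1 + real H * (A + T * A * (1 + real d * Ay))) * norm h"
      by (rule bounds(3)[where Ay=Ay and f=f and Mf=Mf], use yb[OF y] Mf[OF y] RA Tb in \<open>auto simp: Ay_def M_def\<close>)
    have m: "\<bar>Phif \<iota> d H f Rf \<theta> y\<bar> * \<bar>Dexpf \<iota> d H Rf Rd \<theta> y h\<bar>
          \<le> (Mf + T + real H * (T * A)) * ((1 + real H * (A + T * A * (1 + real d * Ay))) * norm h)"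
      using mult_mono[OF b1 b2 order_trans[OF abs_ge_zero b1] abs_ge_zero] .
    have e1: "\<bar>2 * Phif \<iota> d H f Rf \<theta> y * Dexpf \<iota> d H Rf Rd \<theta> y h\<bar>
          = 2 * (\<bar>Phif \<iota> d H f Rf \<theta> y\<bar> * \<bar>Dexpf \<iota> d H Rf Rd \<theta> y h\<bar>)"
      by (simp add: abs_mult)
    show ?thesis unfolding e1 K_def using m by linarith
  qed
  have relu_m: "(\<lambda>x::real. max x 0) \<in> borel_measurable borel" by measurable
  have ind_m: "(indicator {0<..} :: real \<Rightarrow> real) \<in> borel_measurable borel" by measurable
  show ?thesis
  proof (rule integral_dominated_convergence[where w="\<lambda>_. K"])
    show "(\<lambda>y. 2 * Phif \<iota> d H f (\<lambda>x. max x 0) \<theta> y * Dexpf \<iota> d H (\<lambda>x. max x 0) (indicator {0<..}) \<theta> y h) \<in> borel_measurable \<mu>"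
      using meas_Phi[OF S fm relu_m] meas_Dexp[OF S relu_m ind_m] by measurable
    fix r
    show "(\<lambda>y. 2 * Phif \<iota> d H f (R (Suc r)) \<theta> y * Dexpf \<iota> d H (R (Suc r)) (deriv (R (Suc r))) \<theta> y h) \<in> borel_measurable \<mu>"
      using meas_Phi[OF S fm Rm] meas_Dexp[OF S Rm Dm] by measurable
    show "integrable \<mu> (\<lambda>_. K)" by simp
    show "AE y in \<mu>. norm (2 * Phif \<iota> d H f (R (Suc r)) \<theta> y * Dexpf \<iota> d H (R (Suc r)) (deriv (R (Suc r))) \<theta> y h) \<le> K"
      by (intro AE_I2) (use bnd A in auto)
  next
    show "AE y in \<mu>. (\<lambda>r. 2 * Phif \<iota> d H f (R (Suc r)) \<theta> y * Dexpf \<iota> d H (R (Suc r)) (deriv (R (Suc r))) \<theta> y h)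
       \<longlonglongrightarrow> 2 * Phif \<iota> d H f (\<lambda>x. max x 0) \<theta> y * Dexpf \<iota> d H (\<lambda>x. max x 0) (indicator {0<..}) \<theta> y h"
      unfolding Phif_def Dexpf_def
      by (intro AE_I2 tendsto_intros Rl Dl)
  qed
qed

lemma lin_evec: assumes "linear L"
  shows "L (evec \<iota> d H \<theta> i) = (\<Sum>j = 1..d. wgt \<iota> d \<theta> i j * L (axis (\<iota> ((i - 1) * d + j)) 1))
      + bias \<iota> d H \<theta> i * L (axis (\<iota> (H * d + i)) 1) - outw \<iota> d H \<theta> i * L (axis (\<iota> (H * (d + 1) + i)) 1)"
  unfolding evec_def linear_diff[OF assms] linear_add[OF assms] linear_sum[OF assms] linear_scale[OF assms]
  by simp

lemma grad_eq: assumes r: "r \<ge> 1"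
  shows "grad (ann_loss \<iota> d H f (R r) \<mu>) \<theta> $ k =
     (\<integral>y. 2 * Phif \<iota> d H f (R r) \<theta> y * Dexpf \<iota> d H (R r) (deriv (R r)) \<theta> y (axis k 1) \<partial>\<mu>)"
  unfolding grad_def frechet_derivative_at[OF loss_deriv[OF r, of \<theta>], symmetric] by simp

lemma G_combo:
  assumes G_lim: "\<forall>\<theta>. convergent (\<lambda>r. grad (ann_loss \<iota> d H f (R r) \<mu>) \<theta>) \<longrightarrow>
                  (\<lambda>r. grad (ann_loss \<iota> d H f (R r) \<mu>) \<theta>) \<longlonglongrightarrow> G \<theta>"
    and i: "i \<in> {1..H}"
  shows "(\<Sum>j = 1..d. wgt \<iota> d \<theta> i j * G \<theta> $ \<iota> ((i - 1) * d + j))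
      + bias \<iota> d H \<theta> i * G \<theta> $ \<iota> (H * d + i) - outw \<iota> d H \<theta> i * G \<theta> $ \<iota> (H * (d + 1) + i) = 0"
proof -
  define gr where "gr r = grad (ann_loss \<iota> d H f (R r) \<mu>) \<theta>" for r
  define Lim where "Lim = (\<chi> k. \<integral>y. 2 * Phif \<iota> d H f (\<lambda>x. max x 0) \<theta> y * Dexpf \<iota> d H (\<lambda>x. max x 0) (indicator {0<..}) \<theta> y (axis k 1) \<partial>\<mu>)"
  have "(\<lambda>r. gr (Suc r)) \<longlonglongrightarrow> Lim"
  proof (rule vec_tendstoI)
    fix k
    show "((\<lambda>r. gr (Suc r) $ k) \<longlongrightarrow> Lim $ k) sequentially"
    proof -
      have "gr (Suc r) $ k = (\<integral>y. 2 * Phif \<iota> d H f (R (Suc r)) \<theta> y * Dexpf \<iota> d H (R (Suc r)) (deriv (R (Suc r))) \<theta> y (axis k 1) \<partial>\<mu>)" for r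
        unfolding gr_def by (rule grad_eq) simp
      then show ?thesis unfolding Lim_def vec_lambda_beta using conv by simp
    qed
  qed
  then have "gr \<longlonglongrightarrow> Lim" by (rule LIMSEQ_imp_Suc)
  then have "convergent gr" by (rule convergentI)
  then have grG: "gr \<longlonglongrightarrow> G \<theta>" using G_lim unfolding gr_def[abs_def] by blast
  define combo where "combo v = (\<Sum>j = 1..d. wgt \<iota> d \<theta> i j * v $ \<iota> ((i - 1) * d + j))
      + bias \<iota> d H \<theta> i * v $ \<iota> (H * d + i) - outw \<iota> d H \<theta> i * v $ \<iota> (H * (d + 1) + i)" for v :: "real^'n"
  have c1: "(\<lambda>r. combo (gr (Suc r))) \<longlonglongrightarrow> combo (G \<theta>)"
    unfolding combo_def by (intro tendsto_intros LIMSEQ_Suc[OF grG])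
  have c2: "combo (gr (Suc r)) = (\<integral>y. 2 * Phif \<iota> d H f (R (Suc r)) \<theta> y * Dexpf \<iota> d H (R (Suc r)) (deriv (R (Suc r))) \<theta> y (evec \<iota> d H \<theta> i) \<partial>\<mu>)" for r
  proof -
    have r: "Suc r \<ge> 1" by simp
    have lin: "linear (\<lambda>h. \<integral>y. 2 * Phif \<iota> d H f (R (Suc r)) \<theta> y * Dexpf \<iota> d H (R (Suc r)) (deriv (R (Suc r))) \<theta> y h \<partial>\<mu>)"
      using has_derivative_bounded_linear[OF loss_deriv[OF r, of \<theta>]] bounded_linear.linear by blast
    show ?thesis unfolding lin_evec[OF lin] combo_def gr_def grad_eq[OF r] ..
  qed
  have c3: "(\<lambda>r. combo (gr (Suc r))) \<longlonglongrightarrow> (\<integral>y. 2 * Phif \<iota> d H f (\<lambda>x. max x 0) \<theta> y * Dexpf \<iota> d H (\<lambda>x. max x 0) (indicator {0<..}) \<theta> y (evec \<iota> d H \<theta> i) \<partial>\<mu>)"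
    unfolding c2 by (rule conv)
  have "(\<integral>y. 2 * Phif \<iota> d H f (\<lambda>x. max x 0) \<theta> y * Dexpf \<iota> d H (\<lambda>x. max x 0) (indicator {0<..}) \<theta> y (evec \<iota> d H \<theta> i) \<partial>\<mu>) = (\<integral>y. 0 \<partial>\<mu>)"
    by (intro Bochner_Integration.integral_cong refl) (simp add: Dexp_evec[OF i] indicator_def)
  then have "combo (G \<theta>) = 0" using LIMSEQ_unique[OF c1 c3] by simp
  then show ?thesis unfolding combo_def .
qed

end



lemma coord_ode:
  fixes G :: "real^'n \<Rightarrow> real^'n" and \<Theta> :: "real \<Rightarrow> real^'n"
  assumes G_meas: "G \<in> borel_measurable borel"
    and G_locbd: "\<forall>K. compact K \<longrightarrow> bounded (G ` K)"
    and cont: "continuous_on {0..} \<Theta>"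
    and eq: "\<forall>t\<ge>0. \<Theta> t = \<Theta> 0 - (LINT s:{0..t}|lborel. G (\<Theta> s))"
    and t: "0 \<le> t"
  shows "(\<Theta> t $ k)\<^sup>2 - (\<Theta> 0 $ k)\<^sup>2 = -2 * (LINT s:{0..t}|lborel. \<Theta> s $ k * G (\<Theta> s) $ k)"
    and "set_integrable lborel {0..t} (\<lambda>s. \<Theta> s $ k * G (\<Theta> s) $ k)"
proof -
  define \<Theta>' where "\<Theta>' s = \<Theta> (max 0 s)" for s
  have c': "continuous_on UNIV \<Theta>'"
    unfolding \<Theta>'_def
    by (rule continuous_on_compose2[OF cont]) (auto intro!: continuous_intros)
  have [measurable]: "\<Theta>' \<in> borel_measurable borel" by (rule borel_measurable_continuous_onI[OF c'])
  have [measurable]: "G \<in> borel_measurable borel" by (rule G_meas)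
  have eqT: "\<Theta>' s = \<Theta> s" if "0 \<le> s" for s using that by (simp add: \<Theta>'_def)
  have cK: "compact (\<Theta> ` {0..t})"
    by (rule compact_continuous_image[OF continuous_on_subset[OF cont]]) auto
  have "bounded (G ` \<Theta> ` {0..t})" using G_locbd cK by simp
  then obtain B where B0: "\<forall>x\<in>G ` \<Theta> ` {0..t}. norm x \<le> B"
    unfolding bounded_iff by auto
  then have B: "\<And>x. x \<in> G ` \<Theta> ` {0..t} \<Longrightarrow> norm x \<le> B" by auto
  obtain BT where BT0: "\<forall>x\<in>\<Theta> ` {0..t}. norm x \<le> BT"
    using compact_imp_bounded[OF cK] unfolding bounded_iff by auto
  then have BT: "\<And>x. x \<in> \<Theta> ` {0..t} \<Longrightarrow> norm x \<le> BT" by auto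
  have vm[measurable]: "(\<lambda>x::real^'n. x $ k) \<in> borel_measurable borel"
    by (rule borel_measurable_continuous_onI) (intro continuous_intros)
  define g where "g s = G (\<Theta>' s) $ k" for s
  have gm: "g \<in> borel_measurable borel" unfolding g_def
    using measurable_compose[OF measurable_compose[OF borel_measurable_continuous_onI[OF c'] G_meas] vm] by (simp add: o_def)
  have gb: "\<bar>g s\<bar> \<le> B" if "s \<in> {0..t}" for s
    using B[of "G (\<Theta> s)"] that component_le_norm_cart[of "G (\<Theta> s)" k] by (auto simp: g_def eqT)
  have comp: "\<Theta> s $ k = \<Theta> 0 $ k - (LINT u:{0..s}|lborel. g u)" if s: "s \<in> {0..t}" for s
  proof -
    have "(LINT u:{0..s}|lborel. G (\<Theta> u)) = (LINT u:{0..s}|lborel. G (\<Theta>' u))"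
      by (rule set_lebesgue_integral_cong) (auto simp: eqT)
    moreover have int: "integrable lborel (\<lambda>u. indicator {0..s} u *\<^sub>R G (\<Theta>' u))"
    proof (rule integrableI_bounded_set_indicator[where B=B])
      show "emeasure lborel {0..s} < \<infinity>" using s by simp
      show "AE x in lborel. x \<in> {0..s} \<longrightarrow> norm (G (\<Theta>' x)) \<le> B"
        using s by (intro AE_I2) (auto intro!: B simp: eqT)
    qed auto
    moreover have "(LINT u:{0..s}|lborel. G (\<Theta>' u)) $ k = (LINT u:{0..s}|lborel. g u)"
      unfolding set_lebesgue_integral_def g_def
      using integral_bounded_linear[OF bounded_linear_vec_nth int, of k] by simp
    ultimately show ?thesis using eq s by (metis atLeastAtMost_iff vector_minus_component)
  qed
  have main: "(\<Theta> 0 $ k - (LINT u:{0..t}|lborel. g u))\<^sup>2 - (\<Theta> 0 $ k)\<^sup>2 =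
         -2 * (LINT s:{0..t}|lborel. (\<Theta> 0 $ k - (LINT u:{0..s}|lborel. g u)) * g s)"
    by (rule ODE_sq[OF gm t gb])
  have "(LINT s:{0..t}|lborel. (\<Theta> 0 $ k - (LINT u:{0..s}|lborel. g u)) * g s) = (LINT s:{0..t}|lborel. \<Theta> s $ k * G (\<Theta> s) $ k)"
  proof (rule set_lebesgue_integral_cong)
    show "\<forall>x. x \<in> {0..t} \<longrightarrow> (\<Theta> 0 $ k - (LINT u:{0..x}|lborel. g u)) * g x = \<Theta> x $ k * G (\<Theta> x) $ k"
    proof (intro allI impI)
      fix x assume x: "x \<in> {0..t}"
      show "(\<Theta> 0 $ k - (LINT u:{0..x}|lborel. g u)) * g x = \<Theta> x $ k * G (\<Theta> x) $ k"
        unfolding comp[OF x, symmetric] using x by (simp add: g_def eqT)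
    qed
  qed simp
  then show "(\<Theta> t $ k)\<^sup>2 - (\<Theta> 0 $ k)\<^sup>2 = -2 * (LINT s:{0..t}|lborel. \<Theta> s $ k * G (\<Theta> s) $ k)"
    using main comp[of t] t by simp
  show "set_integrable lborel {0..t} (\<lambda>s. \<Theta> s $ k * G (\<Theta> s) $ k)"
    unfolding set_integrable_def
  proof (subst Bochner_Integration.integrable_cong[OF refl])
    show "indicator {0..t} s *\<^sub>R (\<Theta> s $ k * G (\<Theta> s) $ k) = indicator {0..t} s *\<^sub>R (\<Theta>' s $ k * g s)" for s
      by (auto simp: indicator_def g_def eqT)
    show "integrable lborel (\<lambda>s. indicator {0..t} s *\<^sub>R (\<Theta>' s $ k * g s))"
    proof (rule integrableI_bounded_set_indicator[where B="BT * B"])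
      show "emeasure lborel {0..t} < \<infinity>" using t by simp
      have "(\<lambda>s. \<Theta>' s $ k) \<in> borel_measurable borel"
        using measurable_compose[OF borel_measurable_continuous_onI[OF c'] vm] by (simp add: o_def)
      then show "(\<lambda>s. \<Theta>' s $ k * g s) \<in> borel_measurable lborel" using gm by simp
      show "AE x in lborel. x \<in> {0..t} \<longrightarrow> norm (\<Theta>' x $ k * g x) \<le> BT * B"
      proof (intro AE_I2 impI)
        fix x assume x: "x \<in> {0..t}"
        have "\<bar>\<Theta>' x $ k\<bar> \<le> BT" using BT[of "\<Theta> x"] x component_le_norm_cart[of "\<Theta> x" k] by (auto simp: eqT)
        then show "norm (\<Theta>' x $ k * g x) \<le> BT * B"
          unfolding norm_mult real_norm_def abs_mult using gb[OF x] by (intro mult_mono) (auto intro: order_trans[OF abs_ge_zero])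
      qed
    qed auto
  qed
qed

theorem proposition4p4:
  fixes d H :: nat and a b :: real
    and \<iota> :: "nat \<Rightarrow> 'n::finite"
    and f :: "(nat \<Rightarrow> real) \<Rightarrow> real"
    and R :: "nat \<Rightarrow> real \<Rightarrow> real"
    and \<mu> :: "(nat \<Rightarrow> real) measure"
    and G :: "real^'n \<Rightarrow> real^'n"
    and \<Theta> :: "real \<Rightarrow> real^'n"
  assumes "d \<ge> 1" and "H \<ge> 1" and "a < b"
    and "CARD('n) = d * H + 2 * H + 1"
    and "bij_betw \<iota> {1 .. d * H + 2 * H + 1} (UNIV :: 'n set)"
    and "continuous_on ({1..d} \<rightarrow>\<^sub>E {a..b}) f"
    and R_C1: "\<forall>r\<ge>1. (\<forall>x. R r differentiable at x) \<and> continuous_on UNIV (deriv (R r))"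
    and R_lim: "\<forall>x. (\<lambda>r. \<bar>R r x - max x 0\<bar> + \<bar>deriv (R r) x - indicator {0<..} x\<bar>) \<longlonglongrightarrow> 0"
    and R_bd: "\<forall>x. \<exists>C. \<forall>r\<ge>1. \<forall>y\<in>{-\<bar>x\<bar>..\<bar>x\<bar>}. \<bar>deriv (R r) y\<bar> \<le> C"
    and "finite_measure \<mu>"
    and "sets \<mu> = sets (restrict_space (Pi\<^sub>M {1..d} (\<lambda>_. borel)) ({1..d} \<rightarrow>\<^sub>E {a..b}))"
    and G_lim: "\<forall>\<theta>. convergent (\<lambda>r. grad (ann_loss \<iota> d H f (R r) \<mu>) \<theta>) \<longrightarrow>
                  (\<lambda>r. grad (ann_loss \<iota> d H f (R r) \<mu>) \<theta>) \<longlonglongrightarrow> G \<theta>"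
    and G_meas: "G \<in> borel_measurable borel"
    and G_locbd: "\<forall>K. compact K \<longrightarrow> bounded (G ` K)"
    and "continuous_on {0..} \<Theta>"
    and "\<forall>t\<ge>0. \<Theta> t = \<Theta> 0 - (LINT s:{0..t}|lborel. G (\<Theta> s))"
  shows "(\<forall>t\<ge>0. \<forall>i\<in>{1..H}. Wfun \<iota> d H i (\<Theta> t) = Wfun \<iota> d H i (\<Theta> 0)) \<and>
         (\<forall>t\<ge>0. (\<Sum>i = 1..H. Wfun \<iota> d H i (\<Theta> t)) = (\<Sum>i = 1..H. Wfun \<iota> d H i (\<Theta> 0)))"
proof -
  note G_lim = assms(12)
  have inj: "inj_on \<iota> {1 .. d * H + 2 * H + 1}" using assms(5) by (rule bij_betw_imp_inj_on)
  interpret NN \<iota> d H a b f R \<mu>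
  proof (rule NN.intro)
    show "idx \<iota> d H" by (rule idx.intro[OF assms(1) inj])
    show "NN_axioms d a b f R \<mu>"
      by (rule NN_axioms.intro) (rule assms)+
  qed
  have Wi: "Wfun \<iota> d H i (\<Theta> t) = Wfun \<iota> d H i (\<Theta> 0)" if t: "t \<ge> 0" and i: "i \<in> {1..H}" for t i
  proof -
    define Q where "Q k = (LINT s:{0..t}|lborel. \<Theta> s $ k * G (\<Theta> s) $ k)" for k
    define F where "F k s = indicator {0..t} s *\<^sub>R (\<Theta> s $ k * G (\<Theta> s) $ k)" for k s
    have sq: "(\<Theta> t $ k)\<^sup>2 = (\<Theta> 0 $ k)\<^sup>2 - 2 * Q k" for k
      using coord_ode(1)[OF G_meas G_locbd assms(15) assms(16) t, of k] unfolding Q_def by linarith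
    have Fi: "integrable lborel (F k)" for k
      using coord_ode(2)[OF G_meas G_locbd assms(15) assms(16) t, of k]
      unfolding set_integrable_def F_def by simp
    have QF: "Q k = (\<integral>s. F k s \<partial>lborel)" for k unfolding Q_def F_def set_lebesgue_integral_def ..
    have i1: "integrable lborel (\<lambda>s. \<Sum>j = 1..d. F (\<iota> ((i - 1) * d + j)) s)"
      by (intro Bochner_Integration.integrable_sum Fi)
    have i2: "integrable lborel (\<lambda>s. (\<Sum>j = 1..d. F (\<iota> ((i - 1) * d + j)) s) + F (\<iota> (H * d + i)) s)"
      by (intro Bochner_Integration.integrable_add i1 Fi)
    have "(\<integral>s. (\<Sum>j = 1..d. F (\<iota> ((i - 1) * d + j)) s) + F (\<iota> (H * d + i)) s - F (\<iota> (H * (d + 1) + i)) s \<partial>lborel)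
        = (\<integral>s. (\<Sum>j = 1..d. F (\<iota> ((i - 1) * d + j)) s) + F (\<iota> (H * d + i)) s \<partial>lborel) - (\<integral>s. F (\<iota> (H * (d + 1) + i)) s \<partial>lborel)"
      by (rule Bochner_Integration.integral_diff[OF i2 Fi])
    also have "\<dots> = (\<integral>s. (\<Sum>j = 1..d. F (\<iota> ((i - 1) * d + j)) s) \<partial>lborel) + (\<integral>s. F (\<iota> (H * d + i)) s \<partial>lborel) - (\<integral>s. F (\<iota> (H * (d + 1) + i)) s \<partial>lborel)"
      by (simp only: Bochner_Integration.integral_add[OF i1 Fi])
    also have "\<dots> = (\<Sum>j = 1..d. Q (\<iota> ((i - 1) * d + j))) + Q (\<iota> (H * d + i)) - Q (\<iota> (H * (d + 1) + i))"
      unfolding QF by (subst Bochner_Integration.integral_sum) (auto intro: Fi)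
    finally have "(\<Sum>j = 1..d. Q (\<iota> ((i - 1) * d + j))) + Q (\<iota> (H * d + i)) - Q (\<iota> (H * (d + 1) + i))
        = (\<integral>s. (\<Sum>j = 1..d. F (\<iota> ((i - 1) * d + j)) s) + F (\<iota> (H * d + i)) s - F (\<iota> (H * (d + 1) + i)) s \<partial>lborel)"
      by (rule sym)
    also have "\<dots> = (\<integral>s. (0::real) \<partial>(lborel::real measure))"
    proof (rule Bochner_Integration.integral_cong[OF refl])
      fix s :: real assume "s \<in> space lborel"
      have "(\<Sum>j = 1..d. F (\<iota> ((i - 1) * d + j)) s) + F (\<iota> (H * d + i)) s - F (\<iota> (H * (d + 1) + i)) s
          = indicator {0..t} s * ((\<Sum>j = 1..d. wgt \<iota> d (\<Theta> s) i j * G (\<Theta> s) $ \<iota> ((i - 1) * d + j))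
              + bias \<iota> d H (\<Theta> s) i * G (\<Theta> s) $ \<iota> (H * d + i) - outw \<iota> d H (\<Theta> s) i * G (\<Theta> s) $ \<iota> (H * (d + 1) + i))"
        by (simp only: F_def wgt_def bias_def outw_def real_scaleR_def sum_distrib_left distrib_left right_diff_distrib)
      also have "\<dots> = 0" unfolding G_combo[OF G_lim i, of "\<Theta> s"] by (rule mult_zero_right)
      finally show "(\<Sum>j = 1..d. F (\<iota> ((i - 1) * d + j)) s) + F (\<iota> (H * d + i)) s - F (\<iota> (H * (d + 1) + i)) s = 0" .
    qed
    finally have z: "(\<Sum>j = 1..d. Q (\<iota> ((i - 1) * d + j))) + Q (\<iota> (H * d + i)) - Q (\<iota> (H * (d + 1) + i)) = 0"
      by simp
    have "Wfun \<iota> d H i (\<Theta> t) = Wfun \<iota> d H i (\<Theta> 0)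
        - 2 * ((\<Sum>j = 1..d. Q (\<iota> ((i - 1) * d + j))) + Q (\<iota> (H * d + i)) - Q (\<iota> (H * (d + 1) + i)))"
      unfolding Wfun_def wgt_def bias_def outw_def sq sum_subtractf sum_distrib_left[symmetric] by (simp add: algebra_simps)
    then show ?thesis using z by simp
  qed
  show ?thesis
  proof (intro conjI allI impI ballI)
    fix t :: real and i assume "t \<ge> 0" "i \<in> {1..H}"
    then show "Wfun \<iota> d H i (\<Theta> t) = Wfun \<iota> d H i (\<Theta> 0)" by (rule Wi)
  next
    fix t :: real assume t: "t \<ge> 0"
    show "(\<Sum>i = 1..H. Wfun \<iota> d H i (\<Theta> t)) = (\<Sum>i = 1..H. Wfun \<iota> d H i (\<Theta> 0))"
      by (rule sum.cong[OF refl]) (rule Wi[OF t])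
  qed
qed

end
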